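(* Let $W:\mathbb{R}\to[0,\infty]$ and constants $a,C_1,C_2>0$ be such that for all $t>0$, $B_W(at)\subset C_1t\,B_1^1+C_2\sqrt{t}\,B_2^1$. Then for every $n\ge1$ and all $t>0$, $B_{W_n}(at)\subset C_1t\,B_1^n+C_2\sqrt{t}\,B_2^n$, where $W_n(x)=\sum_{i=1}^n W(x_i)$ for $x\in\mathbb{R}^n$.
   Context: For $V:\mathbb{R}^m\to[0,\infty]$, $B_V(t)=\{x\in\mathbb{R}^m: V(x)\le t\}$. $B_p^n=\{x\in\mathbb{R}^n:(\sum_i|x_i|^p)^{1/p}\le1\}$ is the unit ball of $\ell_p^n$; $+$ is Minkowski sum and $sB$ is the dilate of $B$ by $s$. *)

theory Defs
  imports "HOL-Analysis.Analysis" "HOL-Library.Set_Algebras"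
begin

definition sublevel :: "('a \<Rightarrow> ennreal) \<Rightarrow> ennreal \<Rightarrow> 'a set" where
  "sublevel V t = {x. V x \<le> t}"

definition l1_ball :: "(real ^ 'n) set" where
  "l1_ball = {x. (\<Sum>i\<in>UNIV. \<bar>x $ i\<bar>) \<le> 1}"

definition l2_ball :: "(real ^ 'n) set" where
  "l2_ball = {x. sqrt (\<Sum>i\<in>UNIV. (x $ i)^2) \<le> 1}"

end

theory Submission
  imports Defs
begin

lemma zero_lemma:
  fixes x C1 C2 :: real
  assumes "C1 > 0" "C2 > 0" and h: "\<forall>s>0. \<bar>x\<bar> \<le> C1 * s + C2 * sqrt s"
  shows "x = 0"
proof (rule ccontr)
  assume "x \<noteq> 0"
  hence xp: "\<bar>x\<bar> > 0" by simp
  define s where "s = min 1 ((\<bar>x\<bar> / (2 * (C1 + C2)))^2)"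
  have sp: "s > 0" using xp assms(1,2) by (simp add: s_def)
  have s1: "s \<le> 1" by (simp add: s_def)
  have sq1: "sqrt s \<le> 1" using s1 sp by simp
  have "s = sqrt s * sqrt s" using sp by simp
  also have "\<dots> \<le> sqrt s" using sq1 sp by (intro mult_left_le) auto
  finally have "s \<le> sqrt s" .
  hence "C1 * s + C2 * sqrt s \<le> (C1 + C2) * sqrt s" using assms(1) by (simp add: algebra_simps)
  also have "sqrt s \<le> \<bar>x\<bar> / (2 * (C1 + C2))"
  proof -
    have "s \<le> (\<bar>x\<bar> / (2 * (C1 + C2)))^2" by (simp add: s_def)
    hence "sqrt s \<le> sqrt ((\<bar>x\<bar> / (2 * (C1 + C2)))^2)" by (rule real_sqrt_le_mono)
    thus ?thesis using assms(1,2) by simp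
  qed
  hence "(C1 + C2) * sqrt s \<le> (C1 + C2) * (\<bar>x\<bar> / (2 * (C1 + C2)))"
    using assms(1,2) by (intro mult_left_mono) auto
  also have "\<dots> = \<bar>x\<bar> / 2" using assms(1,2) by (simp add: field_simps)
  finally have "C1 * s + C2 * sqrt s \<le> \<bar>x\<bar> / 2" .
  moreover have "\<bar>x\<bar> \<le> C1 * s + C2 * sqrt s" using h sp by blast
  ultimately show False using xp by linarith
qed

theorem lemma7:
  fixes W :: "real \<Rightarrow> ennreal" and a C1 C2 :: real
  assumes "a > 0" and "C1 > 0" and "C2 > 0"
    and "\<forall>t>0. sublevel W (ennreal (a * t)) \<subseteq>
           ((\<lambda>x. (C1 * t) *\<^sub>R x) ` {x::real. \<bar>x\<bar> \<le> 1}) +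
           ((\<lambda>x. (C2 * sqrt t) *\<^sub>R x) ` {x::real. \<bar>x\<bar> \<le> 1})"
  shows "\<forall>t>0. sublevel (\<lambda>x::real ^ 'n. \<Sum>i\<in>UNIV. W (x $ i)) (ennreal (a * t)) \<subseteq>
           ((\<lambda>x. (C1 * t) *\<^sub>R x) ` l1_ball) +
           ((\<lambda>x. (C2 * sqrt t) *\<^sub>R x) ` l2_ball)"
proof (intro allI impI subsetI)
  fix t :: real and x :: "real ^ 'n"
  assume tp: "t > 0" and "x \<in> sublevel (\<lambda>x::real ^ 'n. \<Sum>i\<in>UNIV. W (x $ i)) (ennreal (a * t))"
  hence sumle: "(\<Sum>i\<in>UNIV. W (x $ i)) \<le> ennreal (a * t)" by (simp add: sublevel_def)
  have key: "\<And>s y. s > 0 \<Longrightarrow> W y \<le> ennreal (a * s) \<Longrightarrow>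
      \<exists>p q. y = p + q \<and> \<bar>p\<bar> \<le> C1 * s \<and> \<bar>q\<bar> \<le> C2 * sqrt s"
  proof -
    fix s y assume sp: "(s::real) > 0" and "W y \<le> ennreal (a * s)"
    hence "y \<in> sublevel W (ennreal (a * s))" by (simp add: sublevel_def)
    with assms(4) sp have "y \<in> ((\<lambda>x. (C1 * s) *\<^sub>R x) ` {x::real. \<bar>x\<bar> \<le> 1}) +
           ((\<lambda>x. (C2 * sqrt s) *\<^sub>R x) ` {x::real. \<bar>x\<bar> \<le> 1})" by blast
    then obtain u v where "u \<in> {x::real. \<bar>x\<bar> \<le> 1}" "v \<in> {x::real. \<bar>x\<bar> \<le> 1}"
      and y: "y = (C1 * s) * u + (C2 * sqrt s) * v"
      by (auto elim!: set_plus_elim)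
    hence "\<bar>(C1 * s) * u\<bar> \<le> C1 * s" "\<bar>(C2 * sqrt s) * v\<bar> \<le> C2 * sqrt s"
      using sp assms(2,3) by (auto simp: abs_mult intro!: mult_left_le)
    with y show "\<exists>p q. y = p + q \<and> \<bar>p\<bar> \<le> C1 * s \<and> \<bar>q\<bar> \<le> C2 * sqrt s" by blast
  qed
  define w where "w i = enn2real (W (x $ i))" for i
  have Wle: "W (x $ i) \<le> ennreal (a * t)" for i
    by (rule order_trans[OF _ sumle]) (rule member_le_sum, auto)
  have Weq: "W (x $ i) = ennreal (w i)" for i
    using Wle[of i] unfolding w_def
    by (metis ennreal_enn2real ennreal_less_top leD neq_top_trans top.not_eq_extremum)
  have w0: "w i \<ge> 0" for i by (simp add: w_def)
  have "ennreal (\<Sum>i\<in>UNIV. w i) \<le> ennreal (a * t)"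
    using sumle by (simp add: Weq sum_ennreal w0)
  hence wsum: "(\<Sum>i\<in>UNIV. w i) \<le> a * t" using assms(1) tp by (simp add: ennreal_le_iff)
  have comp: "\<exists>p q. x $ i = p + q \<and> \<bar>p\<bar> \<le> C1 * (w i / a) \<and> \<bar>q\<bar> \<le> C2 * sqrt (w i / a)" for i
  proof (cases "w i > 0")
    case True
    hence "w i / a > 0" using assms(1) by simp
    moreover have "W (x $ i) \<le> ennreal (a * (w i / a))" using assms(1) by (simp add: Weq)
    ultimately show ?thesis by (rule key)
  next
    case False
    hence wz: "w i = 0" using w0[of i] by simp
    have "\<forall>s>0. \<bar>x $ i\<bar> \<le> C1 * s + C2 * sqrt s"
    proof (intro allI impI)
      fix s :: real assume sp: "s > 0"
      have "W (x $ i) \<le> ennreal (a * s)" by (simp add: Weq wz)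
      from key[OF sp this] obtain p q where "x $ i = p + q" "\<bar>p\<bar> \<le> C1 * s" "\<bar>q\<bar> \<le> C2 * sqrt s" by blast
      thus "\<bar>x $ i\<bar> \<le> C1 * s + C2 * sqrt s" by linarith
    qed
    hence "x $ i = 0" using zero_lemma assms(2,3) by blast
    thus ?thesis using wz by simp
  qed
  then obtain P Q where PQ: "\<And>i. x $ i = P i + Q i \<and> \<bar>P i\<bar> \<le> C1 * (w i / a) \<and> \<bar>Q i\<bar> \<le> C2 * sqrt (w i / a)"
    by metis
  define y :: "real ^ 'n" where "y = (\<chi> i. P i / (C1 * t))"
  define z :: "real ^ 'n" where "z = (\<chi> i. Q i / (C2 * sqrt t))"
  have ct1: "C1 * t > 0" using assms(2) tp by simp
  have ct2: "C2 * sqrt t > 0" using assms(3) tp by simp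
  have "y \<in> l1_ball"
  proof -
    have "(\<Sum>i\<in>UNIV. \<bar>y $ i\<bar>) = (\<Sum>i\<in>UNIV. \<bar>P i\<bar>) / (C1 * t)"
      using ct1 by (simp add: y_def sum_divide_distrib)
    also have "(\<Sum>i\<in>UNIV. \<bar>P i\<bar>) \<le> (\<Sum>i\<in>UNIV. C1 * (w i / a))"
      by (rule sum_mono) (use PQ in blast)
    also have "(\<Sum>i\<in>UNIV. C1 * (w i / a)) = C1 * (\<Sum>i\<in>UNIV. w i) / a"
      by (simp add: sum_distrib_left sum_divide_distrib)
    also have "\<dots> \<le> C1 * (a * t) / a" using wsum assms(1,2)
      by (intro divide_right_mono mult_left_mono) auto
    also have "\<dots> = C1 * t" using assms(1) by simp
    finally have "(\<Sum>i\<in>UNIV. \<bar>y $ i\<bar>) \<le> (C1 * t) / (C1 * t)" using ct1 by (simp add: divide_right_mono)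
    thus ?thesis using assms(2) tp by (simp add: l1_ball_def)
  qed
  moreover have "z \<in> l2_ball"
  proof -
    have "(\<Sum>i\<in>UNIV. (z $ i)^2) = (\<Sum>i\<in>UNIV. (Q i)^2) / (C2^2 * t)"
      using ct2 tp by (simp add: z_def sum_divide_distrib power_divide power_mult_distrib)
    also have "(\<Sum>i\<in>UNIV. (Q i)^2) \<le> (\<Sum>i\<in>UNIV. C2^2 * (w i / a))"
    proof (rule sum_mono)
      fix i
      have "\<bar>Q i\<bar> \<le> C2 * sqrt (w i / a)" using PQ by blast
      hence "\<bar>Q i\<bar>^2 \<le> (C2 * sqrt (w i / a))^2" by (intro power_mono) auto
      thus "(Q i)^2 \<le> C2^2 * (w i / a)" using w0[of i] assms(1)
        by (simp add: power_mult_distrib)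
    qed
    also have "(\<Sum>i\<in>UNIV. C2^2 * (w i / a)) = C2^2 * (\<Sum>i\<in>UNIV. w i) / a"
      by (simp add: sum_distrib_left sum_divide_distrib)
    also have "\<dots> \<le> C2^2 * (a * t) / a" using wsum assms(1)
      by (intro divide_right_mono mult_left_mono) auto
    also have "\<dots> = C2^2 * t" using assms(1) by simp
    finally have "(\<Sum>i\<in>UNIV. (z $ i)^2) \<le> (C2^2 * t) / (C2^2 * t)"
      using ct2 tp assms(3) by (simp add: divide_right_mono)
    hence "(\<Sum>i\<in>UNIV. (z $ i)^2) \<le> 1" using tp assms(3) by simp
    thus ?thesis by (simp add: l2_ball_def)
  qed
  moreover have "x = (C1 * t) *\<^sub>R y + (C2 * sqrt t) *\<^sub>R z"
    using ct1 ct2 PQ assms(2,3) tp by (simp add: vec_eq_iff y_def z_def)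
  ultimately show "x \<in> ((\<lambda>x. (C1 * t) *\<^sub>R x) ` l1_ball) + ((\<lambda>x. (C2 * sqrt t) *\<^sub>R x) ` l2_ball)"
    by (auto intro!: set_plus_intro)
qed

end
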